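(* Let $T\ge2$ be an integer and $\gamma\in\mathbb{R}$. Let $\{\hat c^n_t: n\ge1,\ 1\le t\le T-1\}$ be independent, identically distributed real random variables with mean $c$ and variance $\sigma^2<\infty$. Let $\alpha_{n-1,t}$ ($n\ge1$, $1\le t\le T-1$) be deterministic real numbers. Set $\bar v^0_t=0$ for $1\le t\le T-1$ and $\bar v^n_T=0$ for all $n\ge0$, and for $n\ge1$, $1\le t\le T-1$, $$\hat v^n_t=\hat c^n_t+\gamma\bar v^{n-1}_{t+1},\qquad \bar v^n_t=(1-\alpha_{n-1,t})\bar v^{n-1}_t+\alpha_{n-1,t}\hat v^n_t.$$ For $1\le t,t'\le T-1$ define $\delta^1_t=\alpha_{0,t}$, $\lambda^1_{t,t'}=\alpha_{0,t}^2\mathbf 1_{\{t=t'\}}$, and for $n>1$, $$\delta^n_t=(1+\gamma\delta^{n-1}_{t+1})\alpha_{n-1,t}+(1-\alpha_{n-1,t})\delta^{n-1}_t,$$ $$\lambda^n_{t,t'}=\alpha_{n-1,t}^2\mathbf 1_{\{t=t'\}}+J^{n-1}_{t,t'}+K^{n-1}_{t,t'}+L^{n-1}_{t,t'}+M^{n-1}_{t,t'},$$ where $J^{n-1}_{t,t'}=(1-\alpha_{n-1,t})(1-\alpha_{n-1,t'})\lambda^{n-1}_{t,t'}$, $K^{n-1}_{t,t'}=\gamma(1-\alpha_{n-1,t})\alpha_{n-1,t'}\lambda^{n-1}_{t,t'+1}$, $L^{n-1}_{t,t'}=\gamma\alpha_{n-1,t}(1-\alpha_{n-1,t'})\lambda^{n-1}_{t+1,t'}$,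 $M^{n-1}_{t,t'}=\gamma^2\alpha_{n-1,t}\alpha_{n-1,t'}\lambda^{n-1}_{t+1,t'+1}$, with the conventions $\delta^m_T=0$ and $\lambda^m_{t,T}=\lambda^m_{T,t'}=0$ for all $m$. Then for all $n\ge1$ and $1\le t,t'\le T-1$, $\mathbb{E}(\bar v^n_t)=\delta^n_tc$ and $\mathrm{Cov}(\bar v^n_t,\bar v^n_{t'})=\lambda^n_{t,t'}\sigma^2$.
   Context: This is a finite-horizon (horizon $T$) version of approximate value iteration for a single-state, single-action problem, where at each iteration $n$ the updates are performed for all $t=1,\dots,T-1$, and the terminal value is $0$. *)

theory Defs
  imports "HOL-Probability.Probability"
begin

text \<open>Approximate value iteration, finite horizon T, single state/action.
  vbar alpha gamma T chat n t \<omega> is the iterate bar v^n_t; alpha n t stands for alpha_{n,t},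
  so the update producing bar v^{n+1} uses alpha n t = alpha_{(n+1)-1,t} and chat (n+1) t.\<close>
fun vbar :: "(nat \<Rightarrow> nat \<Rightarrow> real) \<Rightarrow> real \<Rightarrow> nat \<Rightarrow> (nat \<Rightarrow> nat \<Rightarrow> 'a \<Rightarrow> real)
              \<Rightarrow> nat \<Rightarrow> nat \<Rightarrow> 'a \<Rightarrow> real" where
  "vbar alpha gamma T chat 0 t \<omega> = 0"
| "vbar alpha gamma T chat (Suc n) t \<omega> =
     (if 1 \<le> t \<and> t \<le> T - 1 then
        (1 - alpha n t) * vbar alpha gamma T chat n t \<omega>
        + alpha n t * (chat (Suc n) t \<omega> + gamma * vbar alpha gamma T chat n (t + 1) \<omega>)
      else 0)"

fun delta :: "(nat \<Rightarrow> nat \<Rightarrow> real) \<Rightarrow> real \<Rightarrow> nat \<Rightarrow> nat \<Rightarrow> nat \<Rightarrow> real" where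
  "delta alpha gamma T 0 t = 0"
| "delta alpha gamma T (Suc 0) t = (if 1 \<le> t \<and> t \<le> T - 1 then alpha 0 t else 0)"
| "delta alpha gamma T (Suc (Suc n)) t =
     (if 1 \<le> t \<and> t \<le> T - 1 then
        (1 + gamma * delta alpha gamma T (Suc n) (t + 1)) * alpha (Suc n) t
        + (1 - alpha (Suc n) t) * delta alpha gamma T (Suc n) t
      else 0)"

fun lam :: "(nat \<Rightarrow> nat \<Rightarrow> real) \<Rightarrow> real \<Rightarrow> nat \<Rightarrow> nat \<Rightarrow> nat \<Rightarrow> nat \<Rightarrow> real" where
  "lam alpha gamma T 0 t t' = 0"
| "lam alpha gamma T (Suc 0) t t' =
     (if 1 \<le> t \<and> t \<le> T - 1 \<and> 1 \<le> t' \<and> t' \<le> T - 1 then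
        (alpha 0 t)\<^sup>2 * (if t = t' then 1 else 0)
      else 0)"
| "lam alpha gamma T (Suc (Suc n)) t t' =
     (if 1 \<le> t \<and> t \<le> T - 1 \<and> 1 \<le> t' \<and> t' \<le> T - 1 then
        (alpha (Suc n) t)\<^sup>2 * (if t = t' then 1 else 0)
        + (1 - alpha (Suc n) t) * (1 - alpha (Suc n) t') * lam alpha gamma T (Suc n) t t'
        + gamma * (1 - alpha (Suc n) t) * alpha (Suc n) t' * lam alpha gamma T (Suc n) t (t' + 1)
        + gamma * alpha (Suc n) t * (1 - alpha (Suc n) t') * lam alpha gamma T (Suc n) (t + 1) t'
        + gamma\<^sup>2 * alpha (Suc n) t * alpha (Suc n) t' * lam alpha gamma T (Suc n) (t + 1) (t' + 1)
      else 0)"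

definition covariance :: "'a measure \<Rightarrow> ('a \<Rightarrow> real) \<Rightarrow> ('a \<Rightarrow> real) \<Rightarrow> real" where
  "covariance M X Y =
     (LINT x|M. (X x - (LINT y|M. X y)) * (Y x - (LINT y|M. Y y)))"

end

theory Submission imports Defs begin

context prob_space begin

definition L2 :: "('a \<Rightarrow> real) \<Rightarrow> bool" where
  "L2 X \<longleftrightarrow> X \<in> borel_measurable M \<and> integrable M (\<lambda>x. (X x)\<^sup>2)"

lemma L2_int: "L2 X \<Longrightarrow> integrable M X"
  unfolding L2_def by (auto intro: square_integrable_imp_integrable)

lemma L2_prod: assumes "L2 X" "L2 Y" shows "integrable M (\<lambda>x. X x * Y x)"
proof (rule Bochner_Integration.integrable_bound)
  show "integrable M (\<lambda>x. (X x)\<^sup>2 + (Y x)\<^sup>2)" using assms unfolding L2_def by auto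
  show "(\<lambda>x. X x * Y x) \<in> borel_measurable M" using assms unfolding L2_def by auto
  show "AE x in M. norm (X x * Y x) \<le> norm ((X x)\<^sup>2 + (Y x)\<^sup>2)"
  proof (rule AE_I2)
    fix x
    have "0 \<le> (\<bar>X x\<bar> - \<bar>Y x\<bar>)\<^sup>2" by simp
    then have "2 * (\<bar>X x\<bar> * \<bar>Y x\<bar>) \<le> (X x)\<^sup>2 + (Y x)\<^sup>2" by (simp add: power2_diff)
    moreover have "0 \<le> \<bar>X x\<bar> * \<bar>Y x\<bar>" by simp
    ultimately have "\<bar>X x * Y x\<bar> \<le> (X x)\<^sup>2 + (Y x)\<^sup>2" unfolding abs_mult by linarith
    then show "norm (X x * Y x) \<le> norm ((X x)\<^sup>2 + (Y x)\<^sup>2)" by simp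
  qed
qed

lemma L2_add: "L2 X \<Longrightarrow> L2 Y \<Longrightarrow> L2 (\<lambda>x. X x + Y x)"
proof -
  assume a: "L2 X" "L2 Y"
  have "integrable M (\<lambda>x. (X x)\<^sup>2 + 2 * (X x * Y x) + (Y x)\<^sup>2)"
    using a L2_prod[OF a] unfolding L2_def by auto
  moreover have "(\<lambda>x. (X x + Y x)\<^sup>2) = (\<lambda>x. (X x)\<^sup>2 + 2 * (X x * Y x) + (Y x)\<^sup>2)"
    by (simp add: power2_sum fun_eq_iff)
  ultimately show ?thesis using a unfolding L2_def by (auto intro!: borel_measurable_add)
qed

lemma L2_scale: "L2 X \<Longrightarrow> L2 (\<lambda>x. a * X x)"
  unfolding L2_def by (auto simp: power_mult_distrib intro!: borel_measurable_times)

lemma L2_zero: "L2 (\<lambda>x. 0)" unfolding L2_def by simp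

definition K :: "('a \<Rightarrow> real) \<Rightarrow> ('a \<Rightarrow> real) \<Rightarrow> real" where "K X Y = expectation (\<lambda>x. X x * Y x) - expectation X * expectation Y"

lemma cov_K: assumes "L2 X" "L2 Y" shows "covariance M X Y = K X Y"
proof -
  let ?a = "expectation X" and ?b = "expectation Y"
  have iX: "integrable M X" and iY: "integrable M Y" using assms L2_int by auto
  have iXY: "integrable M (\<lambda>x. X x * Y x)" using L2_prod assms by auto
  have "covariance M X Y = expectation (\<lambda>x. (X x * Y x - ?b * X x) - (?a * Y x - ?a * ?b))"
    unfolding covariance_def by (rule Bochner_Integration.integral_cong) (auto simp: algebra_simps)
  also have "\<dots> = expectation (\<lambda>x. X x * Y x) - ?b * ?a - (?a * ?b - ?a * ?b)"
    using iX iY iXY prob_space by (simp add: Bochner_Integration.integral_diff)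
  finally show ?thesis unfolding K_def by simp
qed

lemma K_add: assumes "L2 X" "L2 Y" "L2 Z" shows "K (\<lambda>x. X x + Y x) Z = K X Z + K Y Z"
proof -
  have "expectation (\<lambda>x. (X x + Y x) * Z x) = expectation (\<lambda>x. X x * Z x) + expectation (\<lambda>x. Y x * Z x)"
    using L2_prod assms by (simp add: distrib_right)
  moreover have "expectation (\<lambda>x. X x + Y x) = expectation X + expectation Y"
    using L2_int assms by simp
  ultimately show ?thesis unfolding K_def by (simp add: algebra_simps)
qed

lemma K_scale: "K (\<lambda>x. a * X x) Z = a * K X Z"
  unfolding K_def by (simp add: algebra_simps)

lemma K_sym: "K X Y = K Y X"
proof -
  have "(\<lambda>x. X x * Y x) = (\<lambda>x. Y x * X x)" by (auto simp: fun_eq_iff)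
  then show ?thesis unfolding K_def by simp
qed

lemma K_zero: "K (\<lambda>x. 0) Y = 0"
  unfolding K_def by simp

lemma K_add2: assumes "L2 X" "L2 Y" "L2 Z" shows "K Z (\<lambda>x. X x + Y x) = K Z X + K Z Y"
  using K_add[OF assms] K_sym by metis

lemma K_scale2: "K Z (\<lambda>x. a * X x) = a * K Z X"
  using K_scale K_sym by metis

lemma K_zero2: "K Y (\<lambda>x. 0) = 0"
  using K_zero K_sym by metis

lemma K_self: assumes "L2 X" shows "K X X = variance X"
proof -
  have "K X X = covariance M X X" using cov_K assms by simp
  also have "\<dots> = variance X" unfolding covariance_def by (simp add: power2_eq_square)
  finally show ?thesis .
qed

lemma K_indep:
  fixes X :: "'i \<Rightarrow> 'a \<Rightarrow> real"
  assumes ind: "indep_vars (\<lambda>_. borel) X I" and ij: "i \<in> I" "j \<in> I" "i \<noteq> j"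
    and L: "L2 (X i)" "L2 (X j)"
  shows "K (X i) (X j) = 0"
proof -
  have "indep_var (PiM {i} (\<lambda>_. borel)) (\<lambda>\<omega>. restrict (\<lambda>k. X k \<omega>) {i})
     (PiM {j} (\<lambda>_. borel)) (\<lambda>\<omega>. restrict (\<lambda>k. X k \<omega>) {j})"
    using ij by (intro indep_var_restrict[OF ind]) auto
  then have "indep_var borel ((\<lambda>f. f i) \<circ> (\<lambda>\<omega>. restrict (\<lambda>k. X k \<omega>) {i}))
     borel ((\<lambda>f. f j) \<circ> (\<lambda>\<omega>. restrict (\<lambda>k. X k \<omega>) {j}))"
    by (rule indep_var_compose) (auto intro: measurable_component_singleton)
  then have "indep_var borel (X i) borel (X j)" by (simp add: comp_def)
  then have "expectation (\<lambda>x. X i x * X j x) = expectation (X i) * expectation (X j)"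
    using L L2_int by (intro indep_var_lebesgue_integral) auto
  then show ?thesis unfolding K_def by simp
qed

end

lemma delta_rec: "delta alpha gamma T (Suc n) t = (if 1 \<le> t \<and> t \<le> T - 1 then
   (1 + gamma * delta alpha gamma T n (t + 1)) * alpha n t + (1 - alpha n t) * delta alpha gamma T n t else 0)"
  by (cases n) auto

lemma lam_rec: "lam alpha gamma T (Suc n) t t' =
     (if 1 \<le> t \<and> t \<le> T - 1 \<and> 1 \<le> t' \<and> t' \<le> T - 1 then
        (alpha n t)\<^sup>2 * (if t = t' then 1 else 0)
        + (1 - alpha n t) * (1 - alpha n t') * lam alpha gamma T n t t'
        + gamma * (1 - alpha n t) * alpha n t' * lam alpha gamma T n t (t' + 1)
        + gamma * alpha n t * (1 - alpha n t') * lam alpha gamma T n (t + 1) t'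
        + gamma\<^sup>2 * alpha n t * alpha n t' * lam alpha gamma T n (t + 1) (t' + 1)
      else 0)"
  by (cases n) auto

lemma vbar_rec: "1 \<le> t \<Longrightarrow> t \<le> T - 1 \<Longrightarrow> vbar alpha gamma T chat (Suc n) t =
  (\<lambda>x. (1 - alpha n t) * vbar alpha gamma T chat n t x +
    (alpha n t * chat (Suc n) t x + (alpha n t * gamma) * vbar alpha gamma T chat n (t + 1) x))"
  by (auto simp: fun_eq_iff algebra_simps)

lemma vbar_inv: "\<not> (1 \<le> t \<and> t \<le> T - 1) \<Longrightarrow> vbar alpha gamma T chat (Suc n) t = (\<lambda>x. 0)"
  by (auto simp: fun_eq_iff)

lemma vbar_0: "vbar alpha gamma T chat 0 t = (\<lambda>x. 0)"
  by (auto simp: fun_eq_iff)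

theorem proposition6:
  fixes M :: "'a measure"
    and chat :: "nat \<Rightarrow> nat \<Rightarrow> 'a \<Rightarrow> real"
    and alpha :: "nat \<Rightarrow> nat \<Rightarrow> real"
    and gamma c sigma :: real
    and T n t t' :: nat
  assumes "prob_space M"
    and "T \<ge> 2"
    and rv: "\<And>m s. m \<ge> 1 \<Longrightarrow> 1 \<le> s \<Longrightarrow> s \<le> T - 1 \<Longrightarrow> chat m s \<in> borel_measurable M"
    and indep: "prob_space.indep_vars M (\<lambda>_. borel) (\<lambda>(m, s). chat m s) ({1..} \<times> {1..T - 1})"
    and ident: "\<And>m s. m \<ge> 1 \<Longrightarrow> 1 \<le> s \<Longrightarrow> s \<le> T - 1 \<Longrightarrow>
                  distr M borel (chat m s) = distr M borel (chat 1 1)"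
    and sq_int: "\<And>m s. m \<ge> 1 \<Longrightarrow> 1 \<le> s \<Longrightarrow> s \<le> T - 1 \<Longrightarrow>
                  integrable M (\<lambda>x. (chat m s x)\<^sup>2)"
    and mean: "\<And>m s. m \<ge> 1 \<Longrightarrow> 1 \<le> s \<Longrightarrow> s \<le> T - 1 \<Longrightarrow>
                  prob_space.expectation M (chat m s) = c"
    and var: "\<And>m s. m \<ge> 1 \<Longrightarrow> 1 \<le> s \<Longrightarrow> s \<le> T - 1 \<Longrightarrow>
                  prob_space.variance M (chat m s) = sigma\<^sup>2"
    and "n \<ge> 1"
    and "1 \<le> t" and "t \<le> T - 1"
    and "1 \<le> t'" and "t' \<le> T - 1"
  shows "prob_space.expectation M (vbar alpha gamma T chat n t) = delta alpha gamma T n t * c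
         \<and> covariance M (vbar alpha gamma T chat n t) (vbar alpha gamma T chat n t')
             = lam alpha gamma T n t t' * sigma\<^sup>2"
proof -
  interpret P: prob_space M by fact
  let ?V = "vbar alpha gamma T chat"
  have Lc: "P.L2 (chat m s)" if "m \<ge> 1" "1 \<le> s" "s \<le> T - 1" for m s
    using rv[OF that] sq_int[OF that] unfolding P.L2_def by simp
  have LV: "P.L2 (?V k s)" for k s
  proof (induction k arbitrary: s)
    case 0 then show ?case by (simp add: vbar_0 P.L2_zero)
  next
    case (Suc k)
    show ?case
    proof (cases "1 \<le> s \<and> s \<le> T - 1")
      case True
      then show ?thesis unfolding vbar_rec[OF conjunct1[OF True] conjunct2[OF True]]
        by (intro P.L2_add P.L2_scale Suc Lc) auto
    qed (simp add: vbar_inv P.L2_zero)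
  qed
  have EV: "P.expectation (?V k s) = delta alpha gamma T k s * c" for k s
  proof (induction k arbitrary: s)
    case 0 then show ?case by (simp add: vbar_0)
  next
    case (Suc k)
    show ?case
    proof (cases "1 \<le> s \<and> s \<le> T - 1")
      case True
      have i1: "integrable M (?V k s)" "integrable M (?V k (s+1))" "integrable M (chat (Suc k) s)"
        using LV Lc[of "Suc k" s] True P.L2_int by auto
      show ?thesis unfolding vbar_rec[OF conjunct1[OF True] conjunct2[OF True]] delta_rec
        using True i1 Suc mean[of "Suc k" s] by (simp add: algebra_simps)
    qed (auto simp add: vbar_inv delta_rec)
  qed
  have Kc: "P.K (chat m r) (chat m' r') = (if (m, r) = (m', r') then sigma\<^sup>2 else 0)"
    if "m \<ge> 1" "1 \<le> r" "r \<le> T - 1" "m' \<ge> 1" "1 \<le> r'" "r' \<le> T - 1" for m r m' r'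
  proof (cases "(m, r) = (m', r')")
    case True
    then show ?thesis using P.K_self[OF Lc[of m r]] var[of m r] that by simp
  next
    case False
    have "P.K ((\<lambda>(m, s). chat m s) (m, r)) ((\<lambda>(m, s). chat m s) (m', r')) = 0"
      using that False Lc[of m r] Lc[of m' r']
      by (intro P.K_indep[OF indep]) auto
    then show ?thesis using False by auto
  qed
  have KVc: "P.K (?V k s) (chat m r) = 0" if "k < m" "1 \<le> r" "r \<le> T - 1" for k m r s
    using that
  proof (induction k arbitrary: s)
    case 0 then show ?case by (simp add: vbar_0 P.K_zero)
  next
    case (Suc k)
    show ?case
    proof (cases "1 \<le> s \<and> s \<le> T - 1")
      case True
      have "P.K (chat (Suc k) s) (chat m r) = 0" using Kc[of "Suc k" s m r] True Suc.prems by simp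
      then show ?thesis unfolding vbar_rec[OF conjunct1[OF True] conjunct2[OF True]]
        using Suc True by (simp add: P.K_add P.K_scale P.L2_add P.L2_scale LV Lc Lc[of m r])
    qed (simp add: vbar_inv P.K_zero)
  qed
  have KV: "P.K (?V k s) (?V k s') = lam alpha gamma T k s s' * sigma\<^sup>2" for k s s'
  proof (induction k arbitrary: s s')
    case 0 then show ?case by (simp add: vbar_0 P.K_zero)
  next
    case (Suc k)
    show ?case
    proof (cases "1 \<le> s \<and> s \<le> T - 1 \<and> 1 \<le> s' \<and> s' \<le> T - 1")
      case True
      have c1: "P.K (?V k u) (chat (Suc k) r) = 0" "P.K (chat (Suc k) r) (?V k u) = 0"
        if "1 \<le> r" "r \<le> T - 1" for u r
        using KVc[of k "Suc k" r u] that P.K_sym by auto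
      have c2: "P.K (chat (Suc k) s) (chat (Suc k) s') = (if s = s' then sigma\<^sup>2 else 0)"
        using Kc[of "Suc k" s "Suc k" s'] True by simp
      have L: "P.L2 (chat (Suc k) s)" "P.L2 (chat (Suc k) s')" using Lc True by auto
      show ?thesis
        unfolding vbar_rec[of s T alpha gamma chat k] vbar_rec[of s' T alpha gamma chat k] lam_rec
        using True
        apply (simp add: P.K_add P.K_scale P.K_add2 P.K_scale2 P.L2_add P.L2_scale LV L c1 c2 Suc)
        apply (simp add: algebra_simps power2_eq_square)
        done
    next
      case False
      then show ?thesis by (auto simp: vbar_inv P.K_zero P.K_zero2 lam_rec)
    qed
  qed
  show ?thesis using EV KV P.cov_K LV by simp
qed

end
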